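(* Let $n=2m$ with $m\ge1$, $K$ a field, and let $K(2,n)\subset K[x_{ij}:1\le i\le j\le n]$ be the monomial ideal generated by all products $x_{ij}x_{hk}$ (with $i\le j$, $h\le k$) not involving any variable $x_{a,n+1-a}$ ($1\le a\le m$) and satisfying at least one of: (1) $a+b=n+1$ for some $a\in\{i,j\}$ and $b\in\{h,k\}$; (2) $i<h$ and $j<k$. Let $\Delta$ be the simplicial complex on vertex set $\{(i,j):1\le i\le j\le n\}$ whose Stanley–Reisner ideal is $K(2,n)$, and $\Delta'=\operatorname{core}(\Delta)$. Then $\Delta'$ is pure and has exactly $2^{n-1}$ facets, each with $m$ vertices.
   Context: A cone point of a simplicial complex is a vertex lying in every facet; $\operatorname{core}(\Delta)$ is the restriction of $\Delta$ to the vertices that are not cone points. *)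

theory Defs
  imports Main "HOL-Library.Multiset"
begin

definition facets :: "'v set set \<Rightarrow> 'v set set" where
  "facets D = {F \<in> D. \<forall>G\<in>D. F \<subseteq> G \<longrightarrow> G = F}"

definition cone_point :: "'v set set \<Rightarrow> 'v \<Rightarrow> bool" where
  "cone_point D v \<longleftrightarrow> {v} \<in> D \<and> (\<forall>F\<in>facets D. v \<in> F)"

definition core :: "'v set set \<Rightarrow> 'v set set" where
  "core D = {F \<in> D. \<forall>v\<in>F. \<not> cone_point D v}"

definition pure :: "'v set set \<Rightarrow> bool" where
  "pure D \<longleftrightarrow> (\<exists>d. \<forall>F\<in>facets D. card F = d)"

definition verts :: "nat \<Rightarrow> (nat \<times> nat) set" where
  "verts n = {(i,j). 1 \<le> i \<and> i \<le> j \<and> j \<le> n}"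

text \<open>Monomials are represented by their exponent multisets over the variables.\<close>
definition K2_gens :: "nat \<Rightarrow> (nat \<times> nat) multiset set" where
  "K2_gens n = {{#(i,j), (h,k)#} | i j h k.
      (i,j) \<in> verts n \<and> (h,k) \<in> verts n \<and>
      (\<forall>a. 1 \<le> a \<and> 2 * a \<le> n \<longrightarrow> (i,j) \<noteq> (a, n+1-a) \<and> (h,k) \<noteq> (a, n+1-a)) \<and>
      ((\<exists>a\<in>{i,j}. \<exists>b\<in>{h,k}. a + b = n + 1) \<or> (i < h \<and> j < k))}"

text \<open>Stanley--Reisner complex of a squarefree monomial ideal generated by the monomials
  in gens on vertex set V: F is a face iff the squarefree monomial x_F is not in the
  ideal, i.e. iff no generator divides x_F.\<close>
definition SR_complex :: "'v set \<Rightarrow> 'v multiset set \<Rightarrow> 'v set set" where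
  "SR_complex V gens = {F. F \<subseteq> V \<and> (\<forall>g\<in>gens. \<not> g \<subseteq># mset_set F)}"

end

theory Submission
  imports Defs
begin

definition lab :: "(nat \<times> nat) set \<Rightarrow> nat set" where
  "lab F = fst ` F \<union> snd ` F"

definition chn :: "(nat \<times> nat) set \<Rightarrow> bool" where
  "chn F \<longleftrightarrow> (\<forall>(i,j)\<in>F. \<forall>(h,k)\<in>F. \<not> (i < h \<and> j < k))"

inductive fullchain :: "nat set \<Rightarrow> (nat \<times> nat) set \<Rightarrow> bool" where
  fc_single: "fullchain {x} {(x,x)}"
| fc_min: "finite L \<Longrightarrow> 2 \<le> card L \<Longrightarrow> fullchain (L - {Min L}) H \<Longrightarrow> fullchain L (insert (Min L, Max L) H)"
| fc_max: "finite L \<Longrightarrow> 2 \<le> card L \<Longrightarrow> fullchain (L - {Max L}) H \<Longrightarrow> fullchain L (insert (Min L, Max L) H)"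

lemma lab_insert[simp]: "lab (insert (a,b) F) = insert a (insert b (lab F))"
  by (auto simp: lab_def)
lemma lab_empty[simp]: "lab {} = {}" by (simp add: lab_def)

lemma card2_MinMax: assumes "finite L" "2 \<le> card L" shows "Min L < Max L" "L \<noteq> {}"
proof -
  show ne: "L \<noteq> {}" using assms by auto
  have le: "Min L \<le> Max L" using Min_le[OF assms(1) Max_in[OF assms(1) ne]] .
  have "Min L \<noteq> Max L"
  proof
    assume eq: "Min L = Max L"
    have "L \<subseteq> {Min L}"
    proof
      fix x assume "x \<in> L"
      then have "Min L \<le> x" "x \<le> Max L" using assms(1) by auto
      then show "x \<in> {Min L}" using eq by simp
    qed
    then have "card L \<le> card {Min L}" by (rule card_mono[rotated]) simp
    then show False using assms(2) by simp
  qed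
  then show "Min L < Max L" using le by simp
qed

lemma chnD: "chn F \<Longrightarrow> (i,j) \<in> F \<Longrightarrow> (h,k) \<in> F \<Longrightarrow> i < h \<Longrightarrow> j < k \<Longrightarrow> False"
  unfolding chn_def by fastforce

lemma chnI: "(\<And>i j h k. (i,j) \<in> F \<Longrightarrow> (h,k) \<in> F \<Longrightarrow> i < h \<Longrightarrow> j < k \<Longrightarrow> False) \<Longrightarrow> chn F"
  unfolding chn_def by auto

lemma lab_mem: "(i,j) \<in> H \<Longrightarrow> i \<in> lab H \<and> j \<in> lab H"
  unfolding lab_def by (metis UnI1 UnI2 fst_conv snd_conv image_eqI)

lemma fc_step:
  assumes fin: "finite L" and c2: "2 \<le> card L" and x: "x \<in> L"
    and IH: "finite L' \<and> L' \<noteq> {} \<and> lab H = L' \<and> finite H \<and> card H = card L' \<and>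
     (\<forall>(i,j)\<in>H. i \<le> j) \<and> chn H"
    and L': "L' = L - {x}"
    and xx: "x = Min L \<or> x = Max L"
  shows "finite L \<and> L \<noteq> {} \<and> lab (insert (Min L, Max L) H) = L \<and> finite (insert (Min L, Max L) H)
     \<and> card (insert (Min L, Max L) H) = card L \<and>
     (\<forall>(i,j)\<in>insert (Min L, Max L) H. i \<le> j) \<and> chn (insert (Min L, Max L) H)"
proof -
  have lt: "Min L < Max L" and ne: "L \<noteq> {}" using card2_MinMax fin c2 by auto
  have labH0: "lab H = L'" using IH by blast
  have finH: "finite H" using IH by blast
  have cardH0: "card H = card L'" using IH by blast
  have leH: "\<forall>(i,j)\<in>H. i \<le> j" using IH by blast
  have xl: "x \<notin> lab H" using labH0 L' by simp
  have nin: "(Min L, Max L) \<notin> H"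
  proof
    assume "(Min L, Max L) \<in> H"
    then have "Min L \<in> lab H \<and> Max L \<in> lab H" by (rule lab_mem)
    then show False using xl xx by auto
  qed
  have sub: "Min L \<le> i \<and> j \<le> Max L" if "(i,j) \<in> H" for i j
  proof -
    have "i \<in> L" "j \<in> L" using lab_mem[OF that] labH0 L' by auto
    then show ?thesis using fin by simp
  qed
  have "lab (insert (Min L, Max L) H) = insert (Min L) (insert (Max L) (L - {x}))"
    using labH0 L' by simp
  also have "\<dots> = L" using xx Min_in[OF fin ne] Max_in[OF fin ne] by blast
  finally have labH: "lab (insert (Min L, Max L) H) = L" .
  have "card L = Suc (card L')" using x fin L'
    by (metis card_Suc_Diff1)
  then have cardH: "card (insert (Min L, Max L) H) = card L" using nin finH cardH0 by simp
  have chH: "chn H" using IH by (elim conjE)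
  have chnH: "chn (insert (Min L, Max L) H)"
  proof (rule chnI)
    fix i j h k
    assume a1: "(i,j) \<in> insert (Min L, Max L) H" and a2: "(h,k) \<in> insert (Min L, Max L) H"
      and "i < h" "j < k"
    then show False
    proof (cases "(i,j) \<in> H"; cases "(h,k) \<in> H")
      assume "(i,j) \<in> H" "(h,k) \<in> H"
      then show False using chnD[OF chH] \<open>i < h\<close> \<open>j < k\<close> by blast
    next
      assume "(i,j) \<in> H" "(h,k) \<notin> H"
      then have "h = Min L" "k = Max L" using a2 by auto
      then show False using sub[OF \<open>(i,j) \<in> H\<close>] \<open>i < h\<close> by simp
    next
      assume "(i,j) \<notin> H" "(h,k) \<in> H"
      then have "i = Min L" "j = Max L" using a1 by auto
      then show False using sub[OF \<open>(h,k) \<in> H\<close>] \<open>i < h\<close> \<open>j < k\<close> by simp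
    next
      assume "(i,j) \<notin> H" "(h,k) \<notin> H"
      then show False using a1 a2 \<open>i < h\<close> by auto
    qed
  qed
  have fH: "finite (insert (Min L, Max L) H)" using finH by simp
  have le: "\<forall>(i,j)\<in>insert (Min L, Max L) H. i \<le> j" using leH lt by auto
  show ?thesis by (intro conjI fin ne labH fH cardH le chnH)
qed

lemma fc_props:
  "fullchain L H \<Longrightarrow> finite L \<and> L \<noteq> {} \<and> lab H = L \<and> finite H \<and> card H = card L \<and>
     (\<forall>(i,j)\<in>H. i \<le> j) \<and> chn H"
proof (induction rule: fullchain.induct)
  case (fc_single x)
  then show ?case by (simp add: chn_def)
next
  case (fc_min L H)
  have mi: "Min L \<in> L" using card2_MinMax(2)[OF fc_min.hyps(1,2)] fc_min.hyps(1) Min_in by blast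
  show ?case by (rule fc_step[OF fc_min.hyps(1,2) mi fc_min.IH refl disjI1[OF refl]])
next
  case (fc_max L H)
  have mi: "Max L \<in> L" using card2_MinMax(2)[OF fc_max.hyps(1,2)] fc_max.hyps(1) Max_in by blast
  show ?case by (rule fc_step[OF fc_max.hyps(1,2) mi fc_max.IH refl disjI2[OF refl]])
qed

lemma fc_singleton: "fullchain {x} H \<longleftrightarrow> H = {(x,x)}"
proof
  assume "fullchain {x} H"
  then show "H = {(x,x)}"
    by (cases rule: fullchain.cases) auto
qed (simp add: fc_single)

lemma fc_big:
  assumes fin: "finite L" and c2: "2 \<le> card L"
  shows "fullchain L H \<longleftrightarrow> (\<exists>H'. H = insert (Min L, Max L) H' \<and>
           (fullchain (L - {Min L}) H' \<or> fullchain (L - {Max L}) H'))"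
proof
  assume "fullchain L H"
  then show "\<exists>H'. H = insert (Min L, Max L) H' \<and>
           (fullchain (L - {Min L}) H' \<or> fullchain (L - {Max L}) H')"
  proof (cases rule: fullchain.cases)
    case (fc_single x)
    then show ?thesis using c2 by simp
  qed blast+
next
  assume "\<exists>H'. H = insert (Min L, Max L) H' \<and>
           (fullchain (L - {Min L}) H' \<or> fullchain (L - {Max L}) H')"
  then show "fullchain L H" using fc_min[OF fin c2] fc_max[OF fin c2] by blast
qed

lemma fc_notin:
  assumes "fullchain L' H" "x \<notin> L'" shows "(x, y) \<notin> H" "(y, x) \<notin> H"
  using fc_props[OF assms(1)] lab_mem assms(2) by blast+

lemma fc_count_aux:
  "\<forall>L. finite L \<and> L \<noteq> {} \<and> card L = n \<longrightarrow> card {H. fullchain L H} = 2 ^ (n - 1)"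
proof (induction n rule: less_induct)
  case (less n)
  show ?case
  proof (intro allI impI, elim conjE)
    fix L :: "nat set" assume fin: "finite L" and ne: "L \<noteq> {}" and cn: "card L = n"
    show "card {H. fullchain L H} = 2 ^ (n - 1)"
    proof (cases "n = 1")
      case True
      then obtain x where Lx: "L = {x}" using cn card_1_singletonE by blast
      have "{H. fullchain L H} = {{(x,x)}}" using Lx fc_singleton by auto
      then show ?thesis using True by simp
    next
      case False
      then have c2: "2 \<le> card L" using cn ne fin card_0_eq[OF fin] by linarith
      define a where "a = Min L"
      define b where "b = Max L"
      have ab: "a < b" using card2_MinMax[OF fin c2] a_def b_def by simp
      have aL: "a \<in> L" and bL: "b \<in> L" using Min_in[OF fin ne] Max_in[OF fin ne] a_def b_def by auto
      define S1 where "S1 = {H. fullchain (L - {a}) H}"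
      define S2 where "S2 = {H. fullchain (L - {b}) H}"
      have c1: "card (L - {a}) = n - 1" "card (L - {b}) = n - 1" using cn aL bL fin by auto
      have ne1: "L - {a} \<noteq> {}" "L - {b} \<noteq> {}" using ab aL bL by auto
      have cS1: "card S1 = 2 ^ (n - 1 - 1)" using less.IH[of "n - 1"] c1 ne1 fin cn c2 unfolding S1_def
        by auto
      have cS2: "card S2 = 2 ^ (n - 1 - 1)" using less.IH[of "n - 1"] c1 ne1 fin cn c2 unfolding S2_def
        by auto
      have fS1: "finite S1" by (rule card_ge_0_finite) (simp add: cS1)
      have fS2: "finite S2" by (rule card_ge_0_finite) (simp add: cS2)
      have dis: "S1 \<inter> S2 = {}"
      proof (rule ccontr)
        assume "S1 \<inter> S2 \<noteq> {}"
        then obtain H where "fullchain (L - {a}) H" "fullchain (L - {b}) H" unfolding S1_def S2_def by blast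
        then have "L - {a} = L - {b}" using fc_props by metis
        then show False using ab bL by blast
      qed
      have nab: "(a,b) \<notin> H" if "H \<in> S1 \<union> S2" for H
        using that fc_notin[of "L - {a}" H a b] fc_notin[of "L - {b}" H b a] unfolding S1_def S2_def by blast
      have inj: "inj_on (insert (a,b)) (S1 \<union> S2)"
      proof (rule inj_onI)
        fix H1 H2 assume h1: "H1 \<in> S1 \<union> S2" and h2: "H2 \<in> S1 \<union> S2" and eq: "insert (a,b) H1 = insert (a,b) H2"
        have "H1 = insert (a,b) H1 - {(a,b)}" using nab[OF h1] by simp
        also have "\<dots> = insert (a,b) H2 - {(a,b)}" using eq by simp
        also have "\<dots> = H2" using nab[OF h2] by simp
        finally show "H1 = H2" .
      qed
      have eqS: "{H. fullchain L H} = insert (a,b) ` (S1 \<union> S2)"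
        using fc_big[OF fin c2] unfolding S1_def S2_def a_def b_def by blast
      have "card {H. fullchain L H} = card S1 + card S2"
        using eqS card_image[OF inj] card_Un_disjoint[OF fS1 fS2 dis] by simp
      also have "\<dots> = 2 ^ (n - 1)"
      proof -
        have "n - 1 = Suc (n - 1 - 1)" using c2 cn by simp
        then have "(2::nat) ^ (n - 1) = 2 * 2 ^ (n - 1 - 1)" by (metis power_Suc)
        then show ?thesis using cS1 cS2 by simp
      qed
      finally show ?thesis .
    qed
  qed
qed

lemma fc_count: "finite L \<Longrightarrow> L \<noteq> {} \<Longrightarrow> card {H. fullchain L H} = 2 ^ (card L - 1)"
  using fc_count_aux by blast

lemma chn_subset: assumes "chn G" "G' \<subseteq> G" shows "chn G'"
proof (rule chnI)
  fix i j h k assume "(i,j) \<in> G'" "(h,k) \<in> G'" "i < h" "j < k"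
  then show False using chnD[OF assms(1)] assms(2) by blast
qed

lemma lab_sub: "(i,j) \<in> G \<Longrightarrow> lab G \<subseteq> L \<Longrightarrow> i \<in> L \<and> j \<in> L"
  using lab_mem by blast

lemma lab_left:
  assumes "Min L \<in> lab G" "\<forall>(i,j)\<in>G. i \<le> j" "lab G \<subseteq> L" "finite L"
  shows "\<exists>j. (Min L, j) \<in> G"
proof -
  from assms(1) have "Min L \<in> fst ` G \<or> Min L \<in> snd ` G" unfolding lab_def by blast
  then show ?thesis
  proof
    assume "Min L \<in> fst ` G"
    then show ?thesis by force
  next
    assume "Min L \<in> snd ` G"
    then obtain i where iG: "(i, Min L) \<in> G" by force
    then have "i \<le> Min L" using assms(2) by blast
    moreover have "i \<in> L" using lab_sub[OF iG assms(3)] by blast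
    ultimately have "i = Min L" using assms(4) by (simp add: antisym)
    then show ?thesis using iG by blast
  qed
qed

lemma lab_right:
  assumes "Max L \<in> lab G" "\<forall>(i,j)\<in>G. i \<le> j" "lab G \<subseteq> L" "finite L"
  shows "\<exists>i. (i, Max L) \<in> G"
proof -
  from assms(1) have "Max L \<in> fst ` G \<or> Max L \<in> snd ` G" unfolding lab_def by blast
  then show ?thesis
  proof
    assume "Max L \<in> snd ` G"
    then show ?thesis by force
  next
    assume "Max L \<in> fst ` G"
    then obtain j where jG: "(Max L, j) \<in> G" by force
    then have "Max L \<le> j" using assms(2) by blast
    moreover have "j \<in> L" using lab_sub[OF jG assms(3)] by blast
    ultimately have "j = Max L" using assms(4) by (simp add: antisym)
    then show ?thesis using jG by blast
  qed
qed

lemma fc_ext_aux: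
  "\<forall>L G. finite L \<and> L \<noteq> {} \<and> card L = n \<and> lab G \<subseteq> L \<and> (\<forall>(i,j)\<in>G. i \<le> j) \<and> chn G
      \<longrightarrow> (\<exists>H. fullchain L H \<and> G \<subseteq> H)"
proof (induction n rule: less_induct)
  case (less n)
  show ?case
  proof (intro allI impI, elim conjE)
    fix L :: "nat set" and G
    assume fin: "finite L" and ne: "L \<noteq> {}" and cn: "card L = n" and lG: "lab G \<subseteq> L"
      and le: "\<forall>(i,j)\<in>G. i \<le> j" and ch: "chn G"
    show "\<exists>H. fullchain L H \<and> G \<subseteq> H"
    proof (cases "n = 1")
      case True
      then obtain x where Lx: "L = {x}" using cn card_1_singletonE by blast
      have "G \<subseteq> {(x,x)}"
      proof
        fix p assume "p \<in> G"
        then obtain i j where p: "p = (i,j)" "(i,j) \<in> G" by (cases p) auto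
        then show "p \<in> {(x,x)}" using lab_sub[OF p(2) lG] Lx by simp
      qed
      then show ?thesis using Lx fc_single by blast
    next
      case False
      then have c2: "2 \<le> card L" using cn ne fin card_0_eq[OF fin] by linarith
      define a where "a = Min L"
      define b where "b = Max L"
      have ab: "a < b" using card2_MinMax[OF fin c2] a_def b_def by simp
      have aL: "a \<in> L" and bL: "b \<in> L" using Min_in[OF fin ne] Max_in[OF fin ne] a_def b_def by auto
      have c1: "card (L - {a}) < n" "card (L - {b}) < n" using cn aL bL fin c2 by auto
      have ne1: "L - {a} \<noteq> {}" "L - {b} \<noteq> {}" using ab aL bL by auto
      have IHa: "\<exists>H. fullchain (L - {a}) H \<and> G' \<subseteq> H"
        if "lab G' \<subseteq> L - {a}" "\<forall>(i,j)\<in>G'. i \<le> j" "chn G'" for G'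
        proof -
        have "finite (L - {a}) \<and> L - {a} \<noteq> {} \<and> card (L - {a}) = card (L - {a}) \<and> lab G' \<subseteq> L - {a} \<and> (\<forall>(i,j)\<in>G'. i \<le> j) \<and> chn G'"
          using fin ne1(1) that(1) that(2) that(3) by (intro conjI; (assumption | simp))
        then show ?thesis by (rule less.IH[OF c1(1), rule_format])
      qed
      have IHb: "\<exists>H. fullchain (L - {b}) H \<and> G' \<subseteq> H"
        if "lab G' \<subseteq> L - {b}" "\<forall>(i,j)\<in>G'. i \<le> j" "chn G'" for G'
        proof -
        have "finite (L - {b}) \<and> L - {b} \<noteq> {} \<and> card (L - {b}) = card (L - {b}) \<and> lab G' \<subseteq> L - {b} \<and> (\<forall>(i,j)\<in>G'. i \<le> j) \<and> chn G'"
          using fin ne1(2) that(1) that(2) that(3) by (intro conjI; (assumption | simp))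
        then show ?thesis by (rule less.IH[OF c1(2), rule_format])
      qed
      have fa: "fullchain L (insert (a,b) H)" if "fullchain (L - {a}) H" for H
        using that unfolding a_def b_def by (rule fc_min[OF fin c2])
      have fb: "fullchain L (insert (a,b) H)" if "fullchain (L - {b}) H" for H
        using that unfolding a_def b_def by (rule fc_max[OF fin c2])
      show ?thesis
      proof (cases "a \<in> lab G")
        case False
        then obtain H where "fullchain (L - {a}) H" "G \<subseteq> H" using IHa[of G] lG le ch by blast
        then show ?thesis using fa by blast
      next
        case aG: True
        show ?thesis
        proof (cases "b \<in> lab G")
          case False
          then obtain H where "fullchain (L - {b}) H" "G \<subseteq> H" using IHb[of G] lG le ch by blast
          then show ?thesis using fb by blast
        next
          case bG: True
          obtain j where j: "(a,j) \<in> G" using lab_left[OF aG[unfolded a_def] le lG fin] a_def by blast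
          obtain i where i: "(i,b) \<in> G" using lab_right[OF bG[unfolded b_def] le lG fin] b_def by blast
          have "a \<le> i" "j \<le> b" using lab_sub[OF i lG] lab_sub[OF j lG] fin a_def b_def by auto
          moreover have "\<not> (a < i \<and> j < b)" using chnD[OF ch j i] by blast
          ultimately have abG: "(a,b) \<in> G" using i j by (cases "a = i") auto
          define G' where "G' = G - {(a,b)}"
          have lG': "lab G' \<subseteq> L" using lG unfolding G'_def lab_def by blast
          have le': "\<forall>(i,j)\<in>G'. i \<le> j" using le unfolding G'_def by blast
          have ch': "chn G'" using chn_subset[OF ch] unfolding G'_def by blast
          have "a \<notin> lab G' \<or> b \<notin> lab G'"
          proof (rule ccontr)
            assume "\<not> (a \<notin> lab G' \<or> b \<notin> lab G')"
            then have aG': "a \<in> lab G'" and bG': "b \<in> lab G'" by auto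
            obtain j' where j': "(a,j') \<in> G'" using lab_left[OF aG'[unfolded a_def] le' lG' fin] a_def by blast
            obtain i' where i': "(i',b) \<in> G'" using lab_right[OF bG'[unfolded b_def] le' lG' fin] b_def by blast
            have "a \<le> i'" "j' \<le> b" using lab_sub[OF i' lG'] lab_sub[OF j' lG'] fin a_def b_def by auto
            moreover have "j' \<noteq> b" "i' \<noteq> a" using i' j' unfolding G'_def by auto
            ultimately have "a < i'" "j' < b" by auto
            then show False using chnD[OF ch' j' i'] by blast
          qed
          then obtain H where "fullchain (L - {a}) H \<or> fullchain (L - {b}) H" and GH: "G' \<subseteq> H"
          proof
            assume "a \<notin> lab G'"
            then have "lab G' \<subseteq> L - {a}" using lG' by blast
            then show ?thesis using IHa[OF _ le' ch'] that by blast
          next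
            assume "b \<notin> lab G'"
            then have "lab G' \<subseteq> L - {b}" using lG' by blast
            then show ?thesis using IHb[OF _ le' ch'] that by blast
          qed
          then have "fullchain L (insert (a,b) H)" using fa fb by blast
          moreover have "G \<subseteq> insert (a,b) H" using GH abG unfolding G'_def by blast
          ultimately show ?thesis by blast
        qed
      qed
    qed
  qed
qed

lemma fc_ext: "finite L \<Longrightarrow> L \<noteq> {} \<Longrightarrow> lab G \<subseteq> L \<Longrightarrow> \<forall>(i,j)\<in>G. i \<le> j \<Longrightarrow> chn G
      \<Longrightarrow> \<exists>H. fullchain L H \<and> G \<subseteq> H"
  using fc_ext_aux by blast

lemma facet_exists:
  assumes "finite D" "F \<in> D" shows "\<exists>G\<in>facets D. F \<subseteq> G"
proof -
  obtain G where "G \<in> D" "F \<subseteq> G" "\<forall>b\<in>D. G \<subseteq> b \<longrightarrow> G = b"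
    using finite_has_maximal2[OF assms] by blast
  then show ?thesis unfolding facets_def by blast
qed

definition goodF :: "nat \<Rightarrow> (nat \<times> nat) set \<Rightarrow> bool" where
  "goodF n F \<longleftrightarrow> F \<subseteq> verts n \<and> (\<forall>x\<in>lab F. n + 1 - x \<notin> lab F) \<and> chn F"

definition tf :: "nat \<Rightarrow> nat set \<Rightarrow> nat set" where
  "tf m S = S \<union> (\<lambda>x. 2*m + 1 - x) ` ({1..m} - S)"

lemma verts_finite: "finite (verts n)"
proof -
  have "verts n \<subseteq> {1..n} \<times> {1..n}" unfolding verts_def by auto
  then show ?thesis by (rule finite_subset) simp
qed

lemma lab_verts: "F \<subseteq> verts n \<Longrightarrow> lab F \<subseteq> {1..n}"
  unfolding verts_def lab_def by force

lemma lab_finite: "finite F \<Longrightarrow> finite (lab F)"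
  unfolding lab_def by simp

lemma sigma_free_card:
  assumes "L \<subseteq> {1..2*m}" "\<forall>x\<in>L. 2*m + 1 - x \<notin> L"
  shows "card L \<le> m"
proof -
  let ?s = "\<lambda>x. 2*m + 1 - x"
  have inj: "inj_on ?s L"
  proof (rule inj_onI)
    fix x y assume xy: "x \<in> L" "y \<in> L" "?s x = ?s y"
    have "x \<le> 2*m" "y \<le> 2*m" using xy(1,2) assms(1) by auto
    then show "x = y" using xy(3) by simp
  qed
  have fin: "finite L" using assms(1) finite_subset by blast
  have sub: "?s ` L \<subseteq> {1..2*m}"
  proof
    fix y assume "y \<in> ?s ` L"
    then obtain x where x: "x \<in> L" "y = ?s x" by blast
    have "1 \<le> x" "x \<le> 2*m" using subsetD[OF assms(1) x(1)] by auto
    then show "y \<in> {1..2*m}" using x(2) by auto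
  qed
  have dis: "L \<inter> ?s ` L = {}" using assms(2) by auto
  have "card L + card (?s ` L) = card (L \<union> ?s ` L)"
    using card_Un_disjoint[OF fin _ dis] fin by simp
  also have "\<dots> \<le> card {1..2*m}" using assms(1) sub by (intro card_mono) auto
  finally show ?thesis using card_image[OF inj] by simp
qed

lemma sig_notin: fixes S :: "nat set" assumes "S \<subseteq> {1..m}" "x \<le> m" shows "2*m + 1 - x \<notin> S"
proof
  assume "2*m + 1 - x \<in> S"
  then have "2*m + 1 - x \<le> m" using subsetD[OF assms(1)] by auto
  then show False using assms(2) by simp
qed

lemma tf_props:
  assumes "S \<subseteq> {1..m}"
  shows "tf m S \<subseteq> {1..2*m}" "\<forall>x\<in>tf m S. 2*m + 1 - x \<notin> tf m S"
    "\<forall>a\<in>{1..m}. a \<in> tf m S \<or> 2*m + 1 - a \<in> tf m S"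
    "card (tf m S) = m" "tf m S \<inter> {1..m} = S"
proof -
  let ?s = "\<lambda>x. 2*m + 1 - x"
  show "tf m S \<subseteq> {1..2*m}" using assms unfolding tf_def by auto
  show "\<forall>x\<in>tf m S. 2*m + 1 - x \<notin> tf m S"
  proof
    fix x assume "x \<in> tf m S"
    then consider (a) "x \<in> S" | (b) y where "y \<in> {1..m}" "y \<notin> S" "x = ?s y" unfolding tf_def by blast
    then show "?s x \<notin> tf m S"
    proof cases
      case a
      then have xm: "1 \<le> x" "x \<le> m" using assms by auto
      have "?s x \<notin> S"
      proof
        assume "?s x \<in> S"
        then have "?s x \<le> m" using subsetD[OF assms] by auto
        then show False using xm by simp
      qed
      moreover have "?s x \<noteq> ?s y" if "y \<in> {1..m} - S" for y
      proof
        assume "?s x = ?s y"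
        moreover have "y \<le> m" using that by auto
        ultimately have "x = y" using xm by linarith
        then show False using that a by auto
      qed
      ultimately show ?thesis unfolding tf_def by blast
    next
      case b
      then have "?s x = y" by simp
      moreover have "y \<noteq> ?s z" if "z \<in> {1..m} - S" for z using that b by auto
      ultimately show ?thesis unfolding tf_def using b by auto
    qed
  qed
  show "\<forall>a\<in>{1..m}. a \<in> tf m S \<or> 2*m + 1 - a \<in> tf m S" unfolding tf_def by auto
  show "tf m S \<inter> {1..m} = S" using assms sig_notin[OF assms] unfolding tf_def by auto
  have inj: "inj_on ?s ({1..m} - S)" by (intro inj_onI) auto
  have fin: "finite S" using assms finite_subset by blast
  have dis: "S \<inter> ?s ` ({1..m} - S) = {}" using sig_notin[OF assms] by auto
  have "card (tf m S) = card S + card (?s ` ({1..m} - S))"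
    unfolding tf_def using card_Un_disjoint[OF fin _ dis] by simp
  also have "\<dots> = card S + card ({1..m} - S)" using card_image[OF inj] by simp
  also have "\<dots> = m"
  proof -
    have "card S \<le> card {1..m}" using assms by (intro card_mono) auto
    then show ?thesis using assms fin by (simp add: card_Diff_subset)
  qed
  finally show "card (tf m S) = m" .
qed

lemma tf_char:
  assumes "L \<subseteq> {1..2*m}" "\<forall>x\<in>L. 2*m + 1 - x \<notin> L"
    "\<forall>a\<in>{1..m}. a \<in> L \<or> 2*m + 1 - a \<in> L"
  shows "L = tf m (L \<inter> {1..m})"
proof
  show "L \<subseteq> tf m (L \<inter> {1..m})"
  proof
    fix x assume x: "x \<in> L"
    show "x \<in> tf m (L \<inter> {1..m})"
    proof (cases "x \<le> m")
      case True
      then show ?thesis using x assms(1) unfolding tf_def by auto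
    next
      case False
      then have "2*m + 1 - x \<in> {1..m} - (L \<inter> {1..m})" "x = 2*m + 1 - (2*m + 1 - x)"
        using x assms(1,2) by auto
      then show ?thesis unfolding tf_def by blast
    qed
  qed
next
  show "tf m (L \<inter> {1..m}) \<subseteq> L" using assms(3) unfolding tf_def by auto
qed

lemma card_T: "card (tf m ` Pow {1..m}) = 2 ^ m"
proof -
  have "inj_on (tf m) (Pow {1..m})"
    by (intro inj_onI) (metis PowD tf_props(5))
  then show ?thesis by (simp add: card_image card_Pow)
qed

definition anti :: "nat \<Rightarrow> (nat \<times> nat) set" where
  "anti n = {(a, n+1-a) | a. 1 \<le> a \<and> 2 * a \<le> n}"

definition cnd :: "nat \<Rightarrow> nat \<times> nat \<Rightarrow> nat \<times> nat \<Rightarrow> bool" where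
  "cnd n u v \<longleftrightarrow> (\<exists>a\<in>{fst u, snd u}. \<exists>b\<in>{fst v, snd v}. a + b = n + 1) \<or> (fst u < fst v \<and> snd u < snd v)"

lemma anti_iff: "(\<forall>a. 1 \<le> a \<and> 2 * a \<le> n \<longrightarrow> u \<noteq> (a, n+1-a)) \<longleftrightarrow> u \<notin> anti n"
  unfolding anti_def by blast

lemma K2_eq: "K2_gens n = {{#u, v#} | u v. u \<in> verts n \<and> v \<in> verts n \<and> u \<notin> anti n \<and> v \<notin> anti n \<and> cnd n u v}"
proof -
  have eq: "\<And>i j h k. ((i,j) \<in> verts n \<and> (h,k) \<in> verts n \<and>
      (\<forall>a. 1 \<le> a \<and> 2 * a \<le> n \<longrightarrow> (i,j) \<noteq> (a, n+1-a) \<and> (h,k) \<noteq> (a, n+1-a)) \<and>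
      ((\<exists>a\<in>{i,j}. \<exists>b\<in>{h,k}. a + b = n + 1) \<or> (i < h \<and> j < k))) =
      ((i,j) \<in> verts n \<and> (h,k) \<in> verts n \<and> (i,j) \<notin> anti n \<and> (h,k) \<notin> anti n \<and> cnd n (i,j) (h,k))"
  proof -
    fix i j h k
    have "(\<forall>a. 1 \<le> a \<and> 2 * a \<le> n \<longrightarrow> (i,j) \<noteq> (a, n+1-a) \<and> (h,k) \<noteq> (a, n+1-a)) =
          ((i,j) \<notin> anti n \<and> (h,k) \<notin> anti n)"
      using anti_iff[of n "(i,j)"] anti_iff[of n "(h,k)"] by blast
    moreover have "((\<exists>a\<in>{i,j}. \<exists>b\<in>{h,k}. a + b = n + 1) \<or> (i < h \<and> j < k)) = cnd n (i,j) (h,k)"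
      unfolding cnd_def by simp
    ultimately show "?thesis i j h k" by simp
  qed
  have "K2_gens n = {{#(i,j), (h,k)#} | i j h k. (i,j) \<in> verts n \<and> (h,k) \<in> verts n \<and>
      (i,j) \<notin> anti n \<and> (h,k) \<notin> anti n \<and> cnd n (i,j) (h,k)}"
    unfolding K2_gens_def by (simp only: eq)
  also have "\<dots> = {{#u, v#} | u v. u \<in> verts n \<and> v \<in> verts n \<and> u \<notin> anti n \<and> v \<notin> anti n \<and> cnd n u v}"
  proof (rule set_eqI, rule iffI)
    fix g assume "g \<in> {{#(i,j), (h,k)#} | i j h k. (i,j) \<in> verts n \<and> (h,k) \<in> verts n \<and>
      (i,j) \<notin> anti n \<and> (h,k) \<notin> anti n \<and> cnd n (i,j) (h,k)}"
    then obtain i j h k where "g = {#(i,j), (h,k)#}" "(i,j) \<in> verts n \<and> (h,k) \<in> verts n \<and>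
      (i,j) \<notin> anti n \<and> (h,k) \<notin> anti n \<and> cnd n (i,j) (h,k)" by blast
    then show "g \<in> {{#u, v#} | u v. u \<in> verts n \<and> v \<in> verts n \<and> u \<notin> anti n \<and> v \<notin> anti n \<and> cnd n u v}"
      by blast
  next
    fix g assume "g \<in> {{#u, v#} | u v. u \<in> verts n \<and> v \<in> verts n \<and> u \<notin> anti n \<and> v \<notin> anti n \<and> cnd n u v}"
    then obtain u v where uv: "g = {#u, v#}" "u \<in> verts n \<and> v \<in> verts n \<and> u \<notin> anti n \<and> v \<notin> anti n \<and> cnd n u v"
      by blast
    obtain i j h k where "u = (i,j)" "v = (h,k)" by (cases u, cases v) auto
    then show "g \<in> {{#(i,j), (h,k)#} | i j h k. (i,j) \<in> verts n \<and> (h,k) \<in> verts n \<and>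
      (i,j) \<notin> anti n \<and> (h,k) \<notin> anti n \<and> cnd n (i,j) (h,k)}" using uv by blast
  qed
  finally show ?thesis .
qed

lemma pair_sub_mset: assumes "finite F"
  shows "{#u, v#} \<subseteq># mset_set F \<longleftrightarrow> u \<in> F \<and> v \<in> F \<and> u \<noteq> v"
proof
  assume h: "{#u, v#} \<subseteq># mset_set F"
  have c1: "count {#u, v#} u \<le> count (mset_set F) u" by (rule mset_subset_eq_count[OF h])
  have c2: "count {#u, v#} v \<le> count (mset_set F) v" by (rule mset_subset_eq_count[OF h])
  have le1: "count (mset_set F) x \<le> 1" for x using assms by (simp add: count_mset_set')
  have "u \<noteq> v"
  proof
    assume "u = v"
    then have "2 \<le> count (mset_set F) u" using c1 by simp
    then show False using le1[of u] by simp
  qed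
  with c1 c2 show "u \<in> F \<and> v \<in> F \<and> u \<noteq> v" using assms
    by (auto simp: count_mset_set split: if_splits)
next
  assume "u \<in> F \<and> v \<in> F \<and> u \<noteq> v"
  then show "{#u, v#} \<subseteq># mset_set F" using assms
    by (auto simp: subseteq_mset_def count_mset_set)
qed

lemma D_mem:
  "F \<in> SR_complex (verts n) (K2_gens n) \<longleftrightarrow>
     F \<subseteq> verts n \<and> (\<forall>u\<in>F. \<forall>v\<in>F. u \<notin> anti n \<longrightarrow> v \<notin> anti n \<longrightarrow> u \<noteq> v \<longrightarrow> \<not> cnd n u v)"
proof
  assume "F \<in> SR_complex (verts n) (K2_gens n)"
  then have sub: "F \<subseteq> verts n" and ng: "\<forall>g\<in>K2_gens n. \<not> g \<subseteq># mset_set F"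
    unfolding SR_complex_def by auto
  have fin: "finite F" using sub verts_finite finite_subset by blast
  show "F \<subseteq> verts n \<and> (\<forall>u\<in>F. \<forall>v\<in>F. u \<notin> anti n \<longrightarrow> v \<notin> anti n \<longrightarrow> u \<noteq> v \<longrightarrow> \<not> cnd n u v)"
  proof (intro conjI ballI impI sub)
    fix u v assume "u \<in> F" "v \<in> F" "u \<notin> anti n" "v \<notin> anti n" "u \<noteq> v"
    moreover have "u \<in> verts n" "v \<in> verts n" using sub \<open>u \<in> F\<close> \<open>v \<in> F\<close> by auto
    ultimately show "\<not> cnd n u v" using ng pair_sub_mset[OF fin, of u v] unfolding K2_eq by blast
  qed
next
  assume h: "F \<subseteq> verts n \<and> (\<forall>u\<in>F. \<forall>v\<in>F. u \<notin> anti n \<longrightarrow> v \<notin> anti n \<longrightarrow> u \<noteq> v \<longrightarrow> \<not> cnd n u v)"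
  then have fin: "finite F" using verts_finite finite_subset by blast
  have "\<not> g \<subseteq># mset_set F" if "g \<in> K2_gens n" for g
    using that h pair_sub_mset[OF fin] unfolding K2_eq by blast
  then show "F \<in> SR_complex (verts n) (K2_gens n)" using h unfolding SR_complex_def by blast
qed

lemma anti_iff2: assumes "n = 2*m" "(i,j) \<in> verts n"
  shows "(i,j) \<in> anti n \<longleftrightarrow> i + j = n + 1"
proof
  assume "(i,j) \<in> anti n"
  then show "i + j = n + 1" unfolding anti_def by auto
next
  assume s: "i + j = n + 1"
  have "1 \<le> i" "i \<le> j" using assms(2) unfolding verts_def by auto
  then have "2 * i \<le> n" using s assms(1) by presburger
  then show "(i,j) \<in> anti n" unfolding anti_def using \<open>1 \<le> i\<close> s by force
qed

lemma anti_sub_verts: "anti n \<subseteq> verts n"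
  unfolding anti_def verts_def by auto

abbreviation DD :: "nat \<Rightarrow> (nat \<times> nat) set set" where
  "DD n \<equiv> SR_complex (verts n) (K2_gens n)"

lemma DD_finite: "finite (DD n)"
proof -
  have "DD n \<subseteq> Pow (verts n)" using D_mem by blast
  then show ?thesis using verts_finite by (simp add: finite_subset)
qed

lemma DD_sub: "F \<in> DD n \<Longrightarrow> F \<subseteq> verts n"
  using D_mem by blast

lemma cone_anti: assumes "v \<in> anti n" shows "cone_point (DD n) v"
proof -
  have vV: "v \<in> verts n" using assms anti_sub_verts by blast
  have "{v} \<in> DD n" using vV unfolding D_mem by blast
  moreover have "v \<in> F" if "F \<in> facets (DD n)" for F
  proof -
    have FD: "F \<in> DD n" and mx: "\<forall>G\<in>DD n. F \<subseteq> G \<longrightarrow> G = F" using that unfolding facets_def by auto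
    have "insert v F \<in> DD n" using FD vV assms unfolding D_mem by blast
    then have "insert v F = F" using mx by blast
    then show ?thesis by blast
  qed
  ultimately show ?thesis unfolding cone_point_def by blast
qed

lemma not_cone: assumes n: "n = 2*m" and vV: "v \<in> verts n" and va: "v \<notin> anti n"
  shows "\<not> cone_point (DD n) v"
proof
  assume cp: "cone_point (DD n) v"
  obtain i j where v: "v = (i,j)" by (cases v)
  have ij: "1 \<le> i" "i \<le> j" "j \<le> n" using vV v unfolding verts_def by auto
  define w where "w = (n + 1 - i, n + 1 - i)"
  have wV: "w \<in> verts n" using ij unfolding w_def verts_def by auto
  have wa: "w \<notin> anti n"
  proof
    assume "w \<in> anti n"
    then have "(n + 1 - i) + (n + 1 - i) = n + 1" using anti_iff2[OF n] wV unfolding w_def by blast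
    then show False using n by presburger
  qed
  have vw: "v \<noteq> w"
  proof
    assume "v = w"
    then have "i = n + 1 - i" unfolding v w_def by simp
    then show False using n ij by presburger
  qed
  have c: "cnd n v w" unfolding cnd_def v w_def using ij by auto
  have "{w} \<in> DD n" using wV unfolding D_mem by blast
  then obtain G where G: "G \<in> facets (DD n)" "{w} \<subseteq> G" using facet_exists[OF DD_finite] by blast
  have "v \<in> G" using cp G(1) unfolding cone_point_def by blast
  moreover have "G \<in> DD n" using G(1) unfolding facets_def by blast
  ultimately show False using G(2) vw va wa c unfolding D_mem by blast
qed

lemma core_eq: assumes n: "n = 2*m" shows "core (DD n) = {F. goodF n F}"
proof (rule set_eqI, rule iffI)
  fix F assume "F \<in> core (DD n)"
  then have FD: "F \<in> DD n" and nc: "\<forall>v\<in>F. \<not> cone_point (DD n) v" unfolding core_def by auto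
  have FV: "F \<subseteq> verts n" using DD_sub[OF FD] .
  have na: "v \<notin> anti n" if "v \<in> F" for v using nc that cone_anti by blast
  have pr: "\<not> cnd n u v" if "u \<in> F" "v \<in> F" "u \<noteq> v" for u v
    using FD that na unfolding D_mem by blast
  have sf: "\<forall>x\<in>lab F. n + 1 - x \<notin> lab F"
  proof (intro ballI notI)
    fix x assume x: "x \<in> lab F" and y: "n + 1 - x \<in> lab F"
    have xn: "x \<le> n" using lab_verts[OF FV] x by auto
    obtain u where u: "u \<in> F" "x \<in> {fst u, snd u}" using x unfolding lab_def by force
    obtain v where v: "v \<in> F" "n + 1 - x \<in> {fst v, snd v}" using y unfolding lab_def by force
    have s: "x + (n + 1 - x) = n + 1" using xn by simp
    show False
    proof (cases "u = v")
      case False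
      then have "cnd n u v" unfolding cnd_def using u(2) v(2) s by blast
      then show False using pr u(1) v(1) False by blast
    next
      case True
      obtain i j where uij: "u = (i,j)" by (cases u)
      have uV: "(i,j) \<in> verts n" using FV u(1) uij by blast
      have "(i,j) \<notin> anti n" using na u(1) uij by blast
      then have nij: "i + j \<noteq> n + 1" using anti_iff2[OF n uV] by blast
      have "x \<in> {i,j}" "n + 1 - x \<in> {i,j}" using u(2) v(2) True uij by auto
      then show False using nij s n by auto presburger+
    qed
  qed
  have ch: "chn F"
  proof (rule chnI)
    fix i j h k assume "(i,j) \<in> F" "(h,k) \<in> F" "i < h" "j < k"
    moreover then have "(i,j) \<noteq> (h,k)" by auto
    moreover have "cnd n (i,j) (h,k)" unfolding cnd_def using \<open>i < h\<close> \<open>j < k\<close> by simp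
    ultimately show False using pr by blast
  qed
  show "F \<in> {F. goodF n F}" using FV sf ch unfolding goodF_def by blast
next
  fix F assume "F \<in> {F. goodF n F}"
  then have FV: "F \<subseteq> verts n" and sf: "\<forall>x\<in>lab F. n + 1 - x \<notin> lab F" and ch: "chn F"
    unfolding goodF_def by auto
  have na: "v \<notin> anti n" if "v \<in> F" for v
  proof
    assume va: "v \<in> anti n"
    obtain i j where v: "v = (i,j)" by (cases v)
    have "i + j = n + 1" using anti_iff2[OF n] FV that va v by blast
    then have "j = n + 1 - i" by simp
    moreover have "i \<in> lab F" "j \<in> lab F" using lab_mem that v by auto
    ultimately show False using sf by blast
  qed
  have pr: "\<not> cnd n u v" if "u \<in> F" "v \<in> F" for u v
  proof
    assume "cnd n u v"
    then consider (a) x y where "x \<in> {fst u, snd u}" "y \<in> {fst v, snd v}" "x + y = n + 1"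
      | (b) "fst u < fst v" "snd u < snd v" unfolding cnd_def by blast
    then show False
    proof cases
      case a
      have "x \<in> lab F" "y \<in> lab F" using a(1,2) that lab_mem[of "fst u" "snd u" F] lab_mem[of "fst v" "snd v" F]
        by auto
      moreover have "y = n + 1 - x" using a(3) by simp
      ultimately show False using sf by blast
    next
      case b
      then show False using chnD[OF ch, of "fst u" "snd u" "fst v" "snd v"] that by simp
    qed
  qed
  have FD: "F \<in> DD n" using FV pr unfolding D_mem by blast
  have "\<not> cone_point (DD n) v" if "v \<in> F" for v
    using not_cone[OF n] FV na that by blast
  then show "F \<in> core (DD n)" using FD unfolding core_def by blast
qed

lemma fc_good:
  assumes n: "n = 2*m" and L: "L \<in> tf m ` Pow {1..m}" and fc: "fullchain L H"
  shows "goodF n H"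
proof -
  obtain S where S: "S \<subseteq> {1..m}" "L = tf m S" using L by blast
  have Ln: "L \<subseteq> {1..n}" and sf: "\<forall>x\<in>L. n + 1 - x \<notin> L" using tf_props[OF S(1)] S(2) n by auto
  have labH: "lab H = L" and le: "\<forall>(i,j)\<in>H. i \<le> j" and ch: "chn H" using fc_props[OF fc] by auto
  have "H \<subseteq> verts n"
  proof
    fix p assume p: "p \<in> H"
    obtain i j where pij: "p = (i,j)" by (cases p)
    have "i \<in> L" "j \<in> L" using lab_mem[of i j H] p pij labH by auto
    then have "1 \<le> i" "j \<le> n" using Ln by auto
    moreover have "i \<le> j" using le p pij by blast
    ultimately show "p \<in> verts n" unfolding verts_def pij by simp
  qed
  then show ?thesis unfolding goodF_def using labH sf ch by simp
qed

lemma good_lab_card: assumes n: "n = 2*m" and g: "goodF n G" shows "card (lab G) \<le> m"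
proof -
  have "lab G \<subseteq> {1..2*m}" using lab_verts g n unfolding goodF_def by blast
  moreover have "\<forall>x\<in>lab G. 2*m + 1 - x \<notin> lab G" using g n unfolding goodF_def by simp
  ultimately show ?thesis by (rule sigma_free_card)
qed

lemma good_fin: "goodF n G \<Longrightarrow> finite G"
  unfolding goodF_def using verts_finite finite_subset by blast

lemma good_le: "goodF n G \<Longrightarrow> \<forall>(i,j)\<in>G. i \<le> j"
  unfolding goodF_def verts_def by blast

lemma good_card: assumes n: "n = 2*m" and g: "goodF n G" shows "card G \<le> m"
proof (cases "G = {}")
  case True then show ?thesis by simp
next
  case False
  have fin: "finite G" using good_fin[OF g] .
  have fl: "finite (lab G)" using lab_finite[OF fin] .
  have nl: "lab G \<noteq> {}" using False unfolding lab_def by blast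
  have ch: "chn G" using g unfolding goodF_def by blast
  obtain H where H: "fullchain (lab G) H" "G \<subseteq> H" using fc_ext[OF fl nl subset_refl good_le[OF g] ch] by blast
  have "card G \<le> card H" using H fc_props[OF H(1)] by (intro card_mono) auto
  also have "\<dots> = card (lab G)" using fc_props[OF H(1)] by simp
  also have "\<dots> \<le> m" using good_lab_card[OF n g] .
  finally show ?thesis .
qed

lemma good_insert:
  assumes n: "n = 2*m" and g: "goodF n G" and a: "1 \<le> a" "a \<le> n" "a \<notin> lab G" "n + 1 - a \<notin> lab G"
    and pq: "p \<le> q" "p \<in> insert a (lab G)" "q \<in> insert a (lab G)" "a = p \<or> a = q"
    and ch: "\<forall>(i,j)\<in>G. \<not> (p < i \<and> q < j) \<and> \<not> (i < p \<and> j < q)"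
  shows "goodF n (insert (p,q) G) \<and> lab (insert (p,q) G) = insert a (lab G)"
proof -
  have GV: "G \<subseteq> verts n" and sf: "\<forall>x\<in>lab G. n + 1 - x \<notin> lab G" and chG: "chn G"
    using g unfolding goodF_def by auto
  have lG: "lab G \<subseteq> {1..n}" using lab_verts[OF GV] .
  have labI: "lab (insert (p,q) G) = insert a (lab G)" using pq by auto
  have pqV: "(p,q) \<in> verts n"
  proof -
    have "1 \<le> p" using pq(2) a(1) lG by auto
    moreover have "q \<le> n" using pq(3) a(2) lG by auto
    ultimately show ?thesis using pq(1) unfolding verts_def by simp
  qed
  have sf2: "\<forall>x\<in>insert a (lab G). n + 1 - x \<notin> insert a (lab G)"
  proof
    fix x assume x: "x \<in> insert a (lab G)"
    show "n + 1 - x \<notin> insert a (lab G)"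
    proof (cases "x = a")
      case True
      have "n + 1 - a \<noteq> a" using n by presburger
      then show ?thesis using True a(4) by simp
    next
      case False
      then have xl: "x \<in> lab G" using x by simp
      have "x \<le> n" using xl lG by auto
      then have "n + 1 - x \<noteq> a" using xl a(4) by (metis add_diff_cancel_left' le_add_diff_inverse2 diff_diff_cancel le_SucI Suc_eq_plus1 add.commute)
      then show ?thesis using sf xl by simp
    qed
  qed
  have ch2: "chn (insert (p,q) G)"
  proof (rule chnI)
    fix i j h k assume h1: "(i,j) \<in> insert (p,q) G" and h2: "(h,k) \<in> insert (p,q) G" and lt: "i < h" "j < k"
    show False
    proof (cases "(i,j) \<in> G")
      case i1: True
      show False
      proof (cases "(h,k) \<in> G")
        case True show False by (rule chnD[OF chG i1 True lt])
      next
        case False then have "h = p" "k = q" using h2 by auto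
        then show False using ch i1 lt by blast
      qed
    next
      case i1: False
      then have ij: "i = p" "j = q" using h1 by auto
      show False
      proof (cases "(h,k) \<in> G")
        case True then show False using ch ij lt by blast
      next
        case False then have "h = p" "k = q" using h2 by auto
        then show False using ij lt by simp
      qed
    qed
  qed
  show ?thesis using labI sf2 ch2 pqV GV unfolding goodF_def by simp
qed

lemma add_vertex:
  assumes n: "n = 2*m" and g: "goodF n G" and a: "1 \<le> a" "a \<le> n" "a \<notin> lab G" "n + 1 - a \<notin> lab G"
  shows "\<exists>v. goodF n (insert v G) \<and> lab (insert v G) = insert a (lab G)"
proof -
  have chG: "chn G" using g unfolding goodF_def by blast
  have leG: "\<forall>(i,j)\<in>G. i \<le> j" using good_le[OF g] .
  have fin: "finite G" using good_fin[OF g] .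
  have ina: "i \<noteq> a" "j \<noteq> a" if "(i,j) \<in> G" for i j using lab_mem[OF that] a(3) by auto
  show ?thesis
  proof (cases "\<exists>i0 j0. (i0,j0) \<in> G \<and> a < i0")
    case True
    then obtain i0 j0 where ij0: "(i0,j0) \<in> G" "a < i0" by blast
    define S where "S = {j. \<exists>i. (i,j) \<in> G \<and> a < i}"
    have fS: "finite S"
    proof -
      have "S \<subseteq> snd ` G" unfolding S_def by force
      then show ?thesis using fin finite_subset by blast
    qed
    have j0S: "j0 \<in> S" using ij0 unfolding S_def by blast
    define d where "d = Max S"
    have "d \<in> S" using Max_in[OF fS] j0S d_def by blast
    then obtain i1 where i1: "(i1,d) \<in> G" "a < i1" unfolding S_def by blast
    have "i1 \<le> d" using leG i1(1) by blast
    then have ad: "a \<le> d" using i1(2) by simp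
    have dl: "d \<in> lab G" using lab_mem[OF i1(1)] by blast
    have ch: "\<forall>(i,j)\<in>G. \<not> (a < i \<and> d < j) \<and> \<not> (i < a \<and> j < d)"
    proof (intro ballI, clarify)
      fix i j assume ij: "(i,j) \<in> G"
      show "\<not> (a < i \<and> d < j) \<and> \<not> (i < a \<and> j < d)"
      proof (intro conjI notI)
        assume "a < i \<and> d < j"
        then have "j \<in> S" using ij unfolding S_def by blast
        then have "j \<le> d" using Max_ge[OF fS] d_def by blast
        then show False using \<open>a < i \<and> d < j\<close> by simp
      next
        assume "i < a \<and> j < d"
        then show False using chnD[OF chG ij i1(1)] i1(2) by simp
      qed
    qed
    have "goodF n (insert (a,d) G) \<and> lab (insert (a,d) G) = insert a (lab G)"
      by (rule good_insert[OF n g a ad]) (use dl ch in auto)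
    then show ?thesis by blast
  next
    case notA: False
    show ?thesis
    proof (cases "\<exists>i0 j0. (i0,j0) \<in> G \<and> j0 < a")
      case True
      then obtain i0 j0 where ij0: "(i0,j0) \<in> G" "j0 < a" by blast
      define S where "S = {i. \<exists>j. (i,j) \<in> G \<and> j < a}"
      have fS: "finite S"
      proof -
        have "S \<subseteq> fst ` G" unfolding S_def by force
        then show ?thesis using fin finite_subset by blast
      qed
      have i0S: "i0 \<in> S" using ij0 unfolding S_def by blast
      define c where "c = Min S"
      have "c \<in> S" using Min_in[OF fS] i0S c_def by blast
      then obtain j1 where j1: "(c,j1) \<in> G" "j1 < a" unfolding S_def by blast
      have "c \<le> j1" using leG j1(1) by blast
      then have ca: "c \<le> a" using j1(2) by simp
      have cl: "c \<in> lab G" using lab_mem[OF j1(1)] by blast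
      have ch: "\<forall>(i,j)\<in>G. \<not> (c < i \<and> a < j) \<and> \<not> (i < c \<and> j < a)"
      proof (intro ballI, clarify)
        fix i j assume ij: "(i,j) \<in> G"
        show "\<not> (c < i \<and> a < j) \<and> \<not> (i < c \<and> j < a)"
        proof (intro conjI notI)
          assume "c < i \<and> a < j"
          then show False using chnD[OF chG j1(1) ij] j1(2) by simp
        next
          assume "i < c \<and> j < a"
          then have "i \<in> S" using ij unfolding S_def by blast
          then have "c \<le> i" using Min_le[OF fS] c_def by blast
          then show False using \<open>i < c \<and> j < a\<close> by simp
        qed
      qed
      have "goodF n (insert (c,a) G) \<and> lab (insert (c,a) G) = insert a (lab G)"
        by (rule good_insert[OF n g a ca]) (use cl ch in auto)
      then show ?thesis by blast
    next
      case notB: False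
      have ch: "\<forall>(i,j)\<in>G. \<not> (a < i \<and> a < j) \<and> \<not> (i < a \<and> j < a)"
        using notA notB by blast
      have "goodF n (insert (a,a) G) \<and> lab (insert (a,a) G) = insert a (lab G)"
        by (rule good_insert[OF n g a order.refl]) (use ch in auto)
      then show ?thesis by blast
    qed
  qed
qed

lemma extend_all_aux:
  assumes n: "n = 2*m"
  shows "\<forall>G. goodF n G \<and> m - card (lab G) = k \<longrightarrow>
     (\<exists>G'. goodF n G' \<and> G \<subseteq> G' \<and> (\<forall>a\<in>{1..m}. a \<in> lab G' \<or> n + 1 - a \<in> lab G'))"
proof (induction k rule: less_induct)
  case (less k)
  show ?case
  proof (intro allI impI, elim conjE)
    fix G assume g: "goodF n G" and k: "m - card (lab G) = k"
    show "\<exists>G'. goodF n G' \<and> G \<subseteq> G' \<and> (\<forall>a\<in>{1..m}. a \<in> lab G' \<or> n + 1 - a \<in> lab G')"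
    proof (cases "\<forall>a\<in>{1..m}. a \<in> lab G \<or> n + 1 - a \<in> lab G")
      case True then show ?thesis using g by blast
    next
      case False
      then obtain a where a: "a \<in> {1..m}" "a \<notin> lab G" "n + 1 - a \<notin> lab G" by blast
      have a': "1 \<le> a" "a \<le> n" using a(1) n by auto
      obtain v where v: "goodF n (insert v G)" "lab (insert v G) = insert a (lab G)"
        using add_vertex[OF n g a'(1) a'(2) a(2) a(3)] by blast
      have fl: "finite (lab G)" using lab_finite[OF good_fin[OF g]] .
      have c1: "card (lab (insert v G)) = Suc (card (lab G))" using v(2) fl a(2) by simp
      have "card (lab (insert v G)) \<le> m" using good_lab_card[OF n v(1)] .
      then have lt: "m - card (lab (insert v G)) < k" using c1 k by simp
      obtain G' where "goodF n G'" "insert v G \<subseteq> G'" "\<forall>a\<in>{1..m}. a \<in> lab G' \<or> n + 1 - a \<in> lab G'"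
        using less.IH[OF lt] v(1) by blast
      then show ?thesis by blast
    qed
  qed
qed

lemma good_ext:
  assumes n: "n = 2*m" and m: "1 \<le> m" and g: "goodF n G"
  shows "\<exists>L\<in>tf m ` Pow {1..m}. \<exists>H. fullchain L H \<and> G \<subseteq> H"
proof -
  obtain G' where g': "goodF n G'" "G \<subseteq> G'" and hit: "\<forall>a\<in>{1..m}. a \<in> lab G' \<or> n + 1 - a \<in> lab G'"
    using extend_all_aux[OF n] g by blast
  have lG: "lab G' \<subseteq> {1..2*m}" using lab_verts g' n unfolding goodF_def by blast
  have sf: "\<forall>x\<in>lab G'. 2*m + 1 - x \<notin> lab G'" using g' n unfolding goodF_def by simp
  have hit': "\<forall>a\<in>{1..m}. a \<in> lab G' \<or> 2*m + 1 - a \<in> lab G'" using hit n by simp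
  have LT: "lab G' \<in> tf m ` Pow {1..m}"
    using tf_char[OF lG sf hit'] by blast
  have ne: "lab G' \<noteq> {}" using hit m by fastforce
  have fl: "finite (lab G')" using lab_finite[OF good_fin[OF g'(1)]] .
  have ch: "chn G'" using g' unfolding goodF_def by blast
  obtain H where "fullchain (lab G') H" "G' \<subseteq> H"
    using fc_ext[OF fl ne subset_refl good_le[OF g'(1)] ch] by blast
  then show ?thesis using LT g'(2) by blast
qed

lemma T_card_L: "L \<in> tf m ` Pow {1..m} \<Longrightarrow> card L = m"
  using tf_props(4) by blast

lemma facets_core:
  assumes n: "n = 2*m" and m: "1 \<le> m"
  shows "facets (core (DD n)) = (\<Union>L\<in>tf m ` Pow {1..m}. {H. fullchain L H})"
proof (rule set_eqI, rule iffI)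
  fix G assume "G \<in> facets (core (DD n))"
  then have g: "goodF n G" and mx: "\<forall>G'. goodF n G' \<longrightarrow> G \<subseteq> G' \<longrightarrow> G' = G"
    unfolding facets_def core_eq[OF n] by auto
  obtain L H where L: "L \<in> tf m ` Pow {1..m}" and H: "fullchain L H" "G \<subseteq> H"
    using good_ext[OF n m g] by blast
  have "goodF n H" using fc_good[OF n L H(1)] .
  then have "H = G" using mx H(2) by blast
  then show "G \<in> (\<Union>L\<in>tf m ` Pow {1..m}. {H. fullchain L H})" using L H(1) by blast
next
  fix H assume "H \<in> (\<Union>L\<in>tf m ` Pow {1..m}. {H. fullchain L H})"
  then obtain L where L: "L \<in> tf m ` Pow {1..m}" and H: "fullchain L H" by blast
  have gH: "goodF n H" using fc_good[OF n L H] .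
  have cH: "card H = m" using fc_props[OF H] T_card_L[OF L] by simp
  have "G' = H" if "goodF n G'" "H \<subseteq> G'" for G'
  proof -
    have "card G' \<le> m" using good_card[OF n that(1)] .
    moreover have "card H \<le> card G'" using that good_fin[OF that(1)] by (intro card_mono) auto
    ultimately have "card H = card G'" using cH by simp
    then show ?thesis using card_subset_eq[OF good_fin[OF that(1)] that(2)] by simp
  qed
  then show "H \<in> facets (core (DD n))" using gH unfolding facets_def core_eq[OF n] by auto
qed

theorem lemma5p1:
  fixes m n :: nat
  assumes "m \<ge> 1" and "n = 2 * m"
  shows "pure (core (SR_complex (verts n) (K2_gens n))) \<and>
         card (facets (core (SR_complex (verts n) (K2_gens n)))) = 2 ^ (n - 1) \<and>
         (\<forall>F \<in> facets (core (SR_complex (verts n) (K2_gens n))). card F = m)"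
proof -
  let ?T = "tf m ` Pow {1..m}"
  have fe: "facets (core (DD n)) = (\<Union>L\<in>?T. {H. fullchain L H})"
    using facets_core[OF assms(2) assms(1)] .
  have cF: "\<forall>F \<in> facets (core (DD n)). card F = m"
  proof
    fix F assume "F \<in> facets (core (DD n))"
    then obtain L where L: "L \<in> ?T" "fullchain L F" using fe by blast
    then show "card F = m" using fc_props[OF L(2)] T_card_L[OF L(1)] by simp
  qed
  have cnt: "\<forall>L\<in>?T. card {H. fullchain L H} = 2 ^ (m - 1)"
  proof
    fix L assume L: "L \<in> ?T"
    have cL: "card L = m" using T_card_L[OF L] .
    then have "L \<noteq> {}" "finite L" using assms(1) card_ge_0_finite[of L] by auto
    then show "card {H. fullchain L H} = 2 ^ (m - 1)" using fc_count cL by simp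
  qed
  have finT: "finite ?T" by simp
  have finS: "\<forall>L\<in>?T. finite {H. fullchain L H}"
  proof
    fix L assume L: "L \<in> ?T"
    have "card {H. fullchain L H} = 2 ^ (m - 1)" using cnt L by blast
    then have "card {H. fullchain L H} \<noteq> 0" by simp
    then show "finite {H. fullchain L H}" using card_ge_0_finite by blast
  qed
  have dis: "\<forall>L1\<in>?T. \<forall>L2\<in>?T. L1 \<noteq> L2 \<longrightarrow> {H. fullchain L1 H} \<inter> {H. fullchain L2 H} = {}"
    using fc_props by blast
  have "card (facets (core (DD n))) = (\<Sum>L\<in>?T. card {H. fullchain L H})"
    unfolding fe by (rule card_UN_disjoint[OF finT finS dis])
  also have "\<dots> = (\<Sum>L\<in>?T. 2 ^ (m - 1))" by (rule sum.cong[OF refl]) (use cnt in blast)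
  also have "\<dots> = 2 ^ m * 2 ^ (m - 1)" using card_T[of m] by simp
  also have "\<dots> = 2 ^ (n - 1)"
  proof -
    have "m + (m - 1) = n - 1" using assms by simp
    then show ?thesis by (metis power_add)
  qed
  finally have c: "card (facets (core (DD n))) = 2 ^ (n - 1)" .
  have "pure (core (DD n))" unfolding pure_def using cF by blast
  then show ?thesis using c cF by blast
qed

end
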